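(* Let $M$, $h_r$, $a_r=h_r(0)$ be as described, and define $K_r(u)=e^{-a_r/n}\big(h_r(u)-a_r\big)$ for $u\in[0,r)$. Then $K_r$ solves $K_r''(K_r')^{n-1}=\exp\big(e^{a_r/n}K_r\big)\mathcal D_M(u)$ on $[0,r)$ with $K_r\to\infty$ as $u\to r$ (so it is a Kähler potential of the complete Kähler–Einstein metric of Ricci curvature $-e^{a_r/n}$ on $T^rM$), $K_r\ge0$, and as $r\to\infty$ the family $\{K_r\}$ converges uniformly on compact subsets of $[0,\infty)$ to a continuous function $K$.
   Context: $M$ is $\mathbb R^n$ or a compact rank-one symmetric space of real dimension $n\ge2$; $u=\sqrt\rho$, $\rho(x,v)=4|v|^2$ on $TM$ with the adapted complex structure; $T^rM=\{|v|<r/2\}$. $\mathcal D_M(u)=u^{n-1}$ for $\mathbb R^n$; $(\sinh u)^{n-1}$ for the round sphere and real projective space; $2^{n-1}(\cosh\frac u2)^k(\sinh\frac u2)^{n-1}$, $k=1,3,7$, for complex projective space, quaternionic projective space, Cayley plane. For $r>0$, $h_r$ is the unique solution, real-analytic in $u^2$, of $h_r''(h_r')^{n-1}=e^{h_r}\mathcal D_M(u)$ on $[0,r)$ with $\lim_{u\to r}h_r=\infty$. *)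

theory Defs
  imports "HOL-Analysis.Analysis"
begin

datatype model_space = Euclid | Sphere | RealProj | ComplexProj | QuatProj | CayleyPlane

fun admissible_dim :: "model_space \<Rightarrow> nat \<Rightarrow> bool" where
  "admissible_dim Euclid n = (n \<ge> 2)"
| "admissible_dim Sphere n = (n \<ge> 2)"
| "admissible_dim RealProj n = (n \<ge> 2)"
| "admissible_dim ComplexProj n = (n \<ge> 2 \<and> even n)"
| "admissible_dim QuatProj n = (n \<ge> 4 \<and> 4 dvd n)"
| "admissible_dim CayleyPlane n = (n = 16)"

fun DM :: "model_space \<Rightarrow> nat \<Rightarrow> real \<Rightarrow> real" where
  "DM Euclid n u = u ^ (n - 1)"
| "DM Sphere n u = (sinh u) ^ (n - 1)"
| "DM RealProj n u = (sinh u) ^ (n - 1)"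
| "DM ComplexProj n u = 2 ^ (n - 1) * (cosh (u/2)) ^ 1 * (sinh (u/2)) ^ (n - 1)"
| "DM QuatProj n u = 2 ^ (n - 1) * (cosh (u/2)) ^ 3 * (sinh (u/2)) ^ (n - 1)"
| "DM CayleyPlane n u = 2 ^ (n - 1) * (cosh (u/2)) ^ 7 * (sinh (u/2)) ^ (n - 1)"

definition real_analytic_on :: "(real \<Rightarrow> real) \<Rightarrow> real set \<Rightarrow> bool" where
  "real_analytic_on g S \<longleftrightarrow>
     (\<forall>x\<in>S. \<exists>c e. e > 0 \<and> (\<forall>y. \<bar>y - x\<bar> < e \<longrightarrow> (\<lambda>k. c k * (y - x) ^ k) sums g y))"

definition solves_MA :: "nat \<Rightarrow> real \<Rightarrow> (real \<Rightarrow> real) \<Rightarrow> (real \<Rightarrow> real) \<Rightarrow> bool" where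
  "solves_MA n r f R \<longleftrightarrow>
     (\<exists>f1 f2. \<forall>u\<in>{0..<r}.
        (f has_real_derivative f1 u) (at u within {0..<r}) \<and>
        (f1 has_real_derivative f2 u) (at u within {0..<r}) \<and>
        f2 u * (f1 u) ^ (n - 1) = R u)"

end

theory Submission
  imports Defs
begin


lemma mono_within:
  fixes f f' :: "real \<Rightarrow> real"
  assumes der: "\<And>x. x\<in>{0..<r} \<Longrightarrow> (f has_real_derivative f' x) (at x within {0..<r})"
    and "0 \<le> a" "a \<le> b" "b < r" and nn: "\<And>x. a < x \<Longrightarrow> x < b \<Longrightarrow> f' x \<ge> 0"
  shows "f a \<le> f b"
proof (rule DERIV_nonneg_imp_increasing_open[OF \<open>a\<le>b\<close>])
  fix x assume x: "a < x" "x < b"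
  have "x \<in> interior {0..<r}" using x assms by auto
  hence "at x within {0..<r} = at x" by (rule at_within_interior)
  with der[of x] x assms show "\<exists>y. DERIV f x :> y \<and> y \<ge> 0" using nn[OF x] by auto
next
  have "continuous_on {0..<r} f"
    using der by (meson DERIV_continuous continuous_on_eq_continuous_within)
  thus "continuous_on {a..b} f" by (rule continuous_on_subset) (use assms in auto)
qed

lemma cont_within:
  fixes f f' :: "real \<Rightarrow> real"
  assumes der: "\<And>x. x\<in>{0..<r} \<Longrightarrow> (f has_real_derivative f' x) (at x within {0..<r})"
  shows "continuous_on {0..<r} f"
    using der by (meson DERIV_continuous continuous_on_eq_continuous_within)

lemma deriv_at:
  assumes "(f has_real_derivative d) (at x within {0..<r})" "0 < x" "x < r"
  shows "(f has_real_derivative d) (at x)"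
proof -
  have "x \<in> interior {0..<r}" using assms by auto
  hence "at x within {0..<r} = at x" by (rule at_within_interior)
  thus ?thesis using assms by simp
qed



lemma DM_cont: "continuous_on UNIV (DM M n)"
  by (cases M) (auto intro!: continuous_intros)

lemma DM_pos: "u > 0 \<Longrightarrow> DM M n u > 0"
  by (cases M) (auto intro!: mult_pos_pos)

lemma sinh_mono_le: "(x::real) \<le> y \<Longrightarrow> sinh x \<le> sinh y"
  by simp

lemma cosh_mono_le: "0 \<le> (x::real) \<Longrightarrow> x \<le> y \<Longrightarrow> cosh x \<le> cosh y"
  by (subst cosh_real_nonneg_le_iff) auto

lemma DM_nonneg: "u \<ge> 0 \<Longrightarrow> DM M n u \<ge> 0"
  by (cases M) auto

lemma DM_mono: "0 \<le> u \<Longrightarrow> u \<le> v \<Longrightarrow> DM M n u \<le> DM M n v"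
proof (cases M)
  case Euclid
  assume "0 \<le> u" "u \<le> v" thus ?thesis using Euclid by (simp add: power_mono)
next
  case Sphere
  assume "0 \<le> u" "u \<le> v" thus ?thesis using Sphere by (simp add: power_mono)
next
  case RealProj
  assume "0 \<le> u" "u \<le> v" thus ?thesis using RealProj by (simp add: power_mono)
next
  case ComplexProj
  assume "0 \<le> u" "u \<le> v" thus ?thesis using ComplexProj
    by (auto intro!: mult_mono power_mono cosh_mono_le)
next
  case QuatProj
  assume "0 \<le> u" "u \<le> v" thus ?thesis using QuatProj
    by (auto intro!: mult_mono power_mono cosh_mono_le)
next
  case CayleyPlane
  assume "0 \<le> u" "u \<le> v" thus ?thesis using CayleyPlane
    by (auto intro!: mult_mono power_mono cosh_mono_le)
qed

lemma exp_div_pow: "m > 0 \<Longrightarrow> exp (x / real m) ^ m = exp x"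
proof -
  assume "m > 0"
  have "exp (x / real m) ^ m = exp (of_nat m * (x / real m))" by (rule exp_of_nat_mult[symmetric])
  also have "of_nat m * (x / real m) = x" using \<open>m > 0\<close> by simp
  finally show ?thesis .
qed

lemma pow_le_base: "(a::real) ^ m \<le> b ^ m \<Longrightarrow> 0 \<le> b \<Longrightarrow> m > 0 \<Longrightarrow> a \<le> b"
  by (metis gr0_implies_Suc power_le_imp_le_base)


locale FD =
  fixes n::nat and D F :: "real \<Rightarrow> real"
  assumes n2: "n \<ge> 2"
    and Dpos: "\<And>u. u > 0 \<Longrightarrow> D u > 0"
    and Dmono: "\<And>u v. 0 \<le> u \<Longrightarrow> u \<le> v \<Longrightarrow> D u \<le> D v"
    and Dnn: "\<And>u. 0 \<le> u \<Longrightarrow> D u \<ge> 0"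
    and Fd: "\<And>u. 0 \<le> u \<Longrightarrow> (F has_real_derivative n * D u) (at u within {0..})"
    and F0: "F 0 = 0"
begin
lemma Fmono: assumes "0 \<le> x" "x \<le> y" shows "F x \<le> F y"
proof (rule mono_within[where r="y+1" and f=F and f'="\<lambda>t. n * D t"])
  fix t assume "t \<in> {0..<y+1}"
  thus "(F has_real_derivative n * D t) (at t within {0..<y+1})"
    by (intro DERIV_subset[OF Fd]) auto
qed (use assms Dnn in auto)

lemma F1pos: "F 1 > 0"
proof -
  have "F (1/2) - n * D (1/2) * (1/2) \<le> F 1 - n * D (1/2) * 1"
  proof (rule mono_within[where r=2 and f="\<lambda>t. F t - n * D (1/2) * t" and f'="\<lambda>t. n * D t - n * D (1/2)"])
    fix t :: real assume t: "t \<in> {0..<2}"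
    show "((\<lambda>t. F t - n * D (1/2) * t) has_real_derivative n * D t - n * D (1/2)) (at t within {0..<2})"
      by (rule derivative_eq_intros DERIV_subset[OF Fd] | use t in force)+
  next
    fix t :: real assume "1/2 < t" "t < 1"
    hence "D (1/2) \<le> D t" by (intro Dmono) auto
    hence "n * D (1/2) \<le> n * D t" by (rule mult_left_mono) simp
    thus "0 \<le> n * D t - n * D (1/2)" by simp
  qed auto
  moreover have "F (1/2) \<ge> 0" using Fmono[of 0 "1/2"] F0 by simp
  moreover have "n * D (1/2) > 0" using Dpos[of "1/2"] n2 by simp
  ultimately show ?thesis by linarith
qed


end

locale setting = FD +
  fixes r::real and h f1 f2 :: "real \<Rightarrow> real"
  assumes r0: "r > 0"
    and hd: "\<And>u. u\<in>{0..<r} \<Longrightarrow> (h has_real_derivative f1 u) (at u within {0..<r})"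
    and fd: "\<And>u. u\<in>{0..<r} \<Longrightarrow> (f1 has_real_derivative f2 u) (at u within {0..<r})"
    and eq: "\<And>u. u\<in>{0..<r} \<Longrightarrow> f2 u * f1 u ^ (n-1) = exp (h u) * D u"
    and f10: "f1 0 = 0"
    and blow: "filterlim h at_top (at_left r)"
begin

lemma f1_ne: assumes "0 < u" "u < r" shows "f1 u \<noteq> 0"
proof
  assume "f1 u = 0"
  with eq[of u] assms n2 have "exp (h u) * D u = 0" by (simp add: power_0_left)
  with Dpos[of u] assms show False by simp
qed

lemma hcont: "continuous_on {0..<r} h" using cont_within[OF hd] .

lemma exists_above: assumes "u < r" shows "\<exists>v. u < v \<and> v < r \<and> h v > y"
proof -
  have e1: "eventually (\<lambda>x. h x > y) (at_left r)" using blow unfolding filterlim_at_top_dense by blast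
  have e2: "eventually (\<lambda>x. x \<in> {u<..<r}) (at_left r)" by (rule eventually_at_left_real[OF assms])
  have "eventually (\<lambda>x. h x > y \<and> x \<in> {u<..<r}) (at_left r)" by (rule eventually_conj[OF e1 e2])
  from eventually_happens[OF this] have "\<exists>x. h x > y \<and> x \<in> {u<..<r}"
    using trivial_limit_at_left_real[of r] by blast
  thus ?thesis by auto
qed

lemma f1_pos: assumes u: "0 < u" "u < r" shows "f1 u > 0"
proof (rule ccontr)
  assume "\<not> f1 u > 0"
  with f1_ne[OF u] have neg: "f1 u < 0" by simp
  obtain v where v: "u < v" "v < r" "h v > h u" using exists_above[OF u(2)] by blast
  have "continuous_on {u..v} h" by (rule continuous_on_subset[OF hcont]) (use u v in auto)
  then obtain m where m: "m \<in> {u..v}" "\<And>y. y \<in> {u..v} \<Longrightarrow> h m \<le> h y"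
    using continuous_attains_inf[OF compact_Icc _ \<open>continuous_on {u..v} h\<close>] v by fastforce
  have dm: "DERIV h m :> f1 m" if "0 < m" "m < r" for m
    using deriv_at[OF hd[of m]] that by auto
  show False
  proof (cases "m = u")
    case True
    obtain d where d: "d > 0" "\<And>t. t > 0 \<Longrightarrow> t < d \<Longrightarrow> h u > h (u + t)"
      using DERIV_neg_dec_right[OF dm[OF u] neg] by blast
    define mm where "mm = min d (v - u)"
    define t where "t = mm / 2"
    have "mm \<le> v - u" "mm \<le> d" "mm > 0" using d v by (auto simp: mm_def)
    hence t: "t > 0" "t < d" "u + t \<in> {u..v}" unfolding t_def by auto
    have "h m = h u" using True by simp
    with d(2)[OF t(1,2)] m(2)[OF t(3)] show False by linarith
  next
    case False
    have "m \<noteq> v" using m(2)[of u] v by auto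
    with False m(1) have mi: "u < m" "m < v" by auto
    have dmm: "DERIV h m :> f1 m" using dm[of m] mi u v by linarith
    have "f1 m = 0"
    proof (rule DERIV_local_min[OF dmm])
      show "0 < min (m - u) (v - m)" using mi by simp
      show "\<forall>y. \<bar>m - y\<bar> < min (m - u) (v - m) \<longrightarrow> h m \<le> h y"
      proof (intro allI impI)
        fix y assume "\<bar>m - y\<bar> < min (m - u) (v - m)"
        hence "\<bar>m - y\<bar> < m - u" "\<bar>m - y\<bar> < v - m" by auto
        hence "y \<in> {u..v}" by (simp add: abs_less_iff)
        thus "h m \<le> h y" by (rule m(2))
      qed
    qed
    with f1_ne[of m] mi u v show False by linarith
  qed
qed

lemma f1_nn: assumes "0 \<le> u" "u < r" shows "f1 u \<ge> 0"
  using f1_pos[of u] assms f10 by (cases "u = 0") auto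

lemma h_mono: assumes "0 \<le> x" "x \<le> y" "y < r" shows "h x \<le> h y"
  by (rule mono_within[OF hd assms]) (use f1_nn assms in auto)

lemma f2_pos: assumes "0 < u" "u < r" shows "f2 u > 0"
proof -
  have "f2 u * f1 u ^ (n-1) > 0" using eq[of u] Dpos[of u] assms by simp
  moreover have "f1 u ^ (n-1) > 0" using f1_pos[OF assms] by simp
  ultimately show ?thesis by (metis zero_less_mult_pos2)
qed

lemma f1_mono: assumes "0 \<le> x" "x \<le> y" "y < r" shows "f1 x \<le> f1 y"
  by (rule mono_within[OF fd assms]) (use f2_pos assms in \<open>auto intro: less_imp_le\<close>)

lemma Fd': "u \<in> {0..<r} \<Longrightarrow> (F has_real_derivative n * D u) (at u within {0..<r})"
  by (rule DERIV_subset[OF Fd]) auto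

lemma f1pow_d: "u \<in> {0..<r} \<Longrightarrow> ((\<lambda>u. f1 u ^ n) has_real_derivative n * exp (h u) * D u) (at u within {0..<r})"
  apply (rule derivative_eq_intros fd refl | assumption)+
  apply (drule eq)
  apply (cases n)
   apply (simp_all add: mult_ac)
  done

lemma lower: assumes "0 \<le> u" "u < r" shows "f1 u ^ n \<ge> exp (h 0) * F u"
proof -
  have "(\<lambda>u. f1 u ^ n - exp (h 0) * F u) 0 \<le> (\<lambda>u. f1 u ^ n - exp (h 0) * F u) u"
  proof (rule mono_within[where r=r and f="\<lambda>u. f1 u ^ n - exp (h 0) * F u" and f'="\<lambda>u. n * exp (h u) * D u - exp (h 0) * (n * D u)"])
    fix x assume x: "x \<in> {0..<r}"
    show "((\<lambda>u. f1 u ^ n - exp (h 0) * F u) has_real_derivative n * exp (h x) * D x - exp (h 0) * (n * D x)) (at x within {0..<r})"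
      by (intro derivative_intros DERIV_cmult f1pow_d Fd' x)
  next
    fix x assume x: "0 < x" "x < u"
    have "exp (h 0) \<le> exp (h x)" using h_mono[of 0 x] x assms by simp
    hence "exp (h 0) * D x \<le> exp (h x) * D x" using Dnn[of x] x by (intro mult_right_mono) auto
    hence "n * (exp (h 0) * D x) \<le> n * (exp (h x) * D x)" by (rule mult_left_mono) simp
    thus "0 \<le> n * exp (h x) * D x - exp (h 0) * (n * D x)"
      by (simp add: algebra_simps)
  qed (use assms in auto)
  thus ?thesis using f10 F0 n2 by (simp add: power_0_left)
qed

lemma upper: assumes "0 \<le> u" "u < r" shows "f1 u ^ n \<le> exp (h u) * F u"
proof -
  have "(\<lambda>t. exp (h u) * F t - f1 t ^ n) 0 \<le> (\<lambda>t. exp (h u) * F t - f1 t ^ n) u"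
  proof (rule mono_within[where r=r and f="\<lambda>t. exp (h u) * F t - f1 t ^ n" and f'="\<lambda>t. exp (h u) * (n * D t) - n * exp (h t) * D t"])
    fix x assume x: "x \<in> {0..<r}"
    show "((\<lambda>t. exp (h u) * F t - f1 t ^ n) has_real_derivative exp (h u) * (n * D x) - n * exp (h x) * D x) (at x within {0..<r})"
      by (intro derivative_intros DERIV_cmult f1pow_d Fd' x)
  next
    fix x assume x: "0 < x" "x < u"
    have "exp (h x) \<le> exp (h u)" using h_mono[of x u] x assms by simp
    hence "exp (h x) * D x \<le> exp (h u) * D x" using Dnn[of x] x by (intro mult_right_mono) auto
    hence "n * (exp (h x) * D x) \<le> n * (exp (h u) * D x)" by (rule mult_left_mono) simp
    thus "0 \<le> exp (h u) * (n * D x) - n * exp (h x) * D x"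
      by (simp add: algebra_simps)
  qed (use assms in auto)
  thus ?thesis using f10 F0 n2 by (simp add: power_0_left)
qed


lemma blowup_bound:
  assumes r1: "r > 1"
  shows "r \<le> 1 + ln 2 / root n (exp (h 0) * F 1)
              + (n+1) * exp (- h 0 / (n+1)) / root (n+1) ((n+1) * D 1 / 2)"
proof -
  define q where "q = root n (exp (h 0) * F 1)"
  define d where "d = D 1"
  define c0 where "c0 = root (n+1) ((n+1) * d / 2)"
  define B where "B = (n+1) * exp (- h 0 / (n+1)) / c0"
  have d0: "d > 0" using Dpos by (simp add: d_def)
  have c0p: "c0 > 0" using d0 by (simp add: c0_def)
  have q0: "q > 0" using F1pos n2 by (simp add: q_def)
  have qle: "q \<le> f1 1"
  proof -
    have "q ^ n = exp (h 0) * F 1" using F1pos n2 by (simp add: q_def)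
    also have "\<dots> \<le> f1 1 ^ n" using lower[of 1] r1 by simp
    finally have "q ^ Suc (n-1) \<le> f1 1 ^ Suc (n-1)" using n2 by simp
    thus ?thesis by (rule power_le_imp_le_base) (use f1_nn[of 1] r1 in simp)
  qed
  obtain v where v: "1 < v" "v < r" "h v > h 1 + ln 2" using exists_above[of 1 "h 1 + ln 2"] r1 by blast
  have "continuous_on {1..v} h" by (rule continuous_on_subset[OF hcont]) (use v in auto)
  then obtain u2 where u2: "1 \<le> u2" "u2 \<le> v" "h u2 = h 1 + ln 2"
    using IVT'[of h 1 "h 1 + ln 2" v] v by auto
  have "h 1 - f1 1 * 1 \<le> h u2 - f1 1 * u2"
  proof (rule mono_within[where r=r and f="\<lambda>t. h t - f1 1 * t" and f'="\<lambda>t. f1 t - f1 1"])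
    fix t assume t: "t \<in> {0..<r}"
    show "((\<lambda>t. h t - f1 1 * t) has_real_derivative f1 t - f1 1) (at t within {0..<r})"
      by (rule derivative_eq_intros hd t | simp)+
  next
    fix t assume "1 < t" "t < u2"
    thus "0 \<le> f1 t - f1 1" using f1_mono[of 1 t] u2 v by simp
  qed (use u2 v in auto)
  hence "f1 1 * (u2 - 1) \<le> ln 2" using u2 by (simp add: algebra_simps)
  hence "q * (u2 - 1) \<le> ln 2" using qle u2 by (meson diff_ge_0_iff_ge mult_right_mono order_trans)
  hence ph1: "u2 - 1 \<le> ln 2 / q" using q0 by (simp add: field_simps)
  have psi: "f1 u ^ (n+1) \<ge> c0 ^ (n+1) * exp (h u)" if u: "u2 \<le> u" "u < r" for u
  proof -
    have m1: "f1 1 ^ (n+1) - (n+1) * d * exp (h 1) \<le> f1 u ^ (n+1) - (n+1) * d * exp (h u)"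
    proof (rule mono_within[where r=r and f="\<lambda>t. f1 t ^ (n+1) - (n+1) * d * exp (h t)"
          and f'="\<lambda>t. (n+1) * f1 t * exp (h t) * (D t - d)"])
      fix t assume t: "t \<in> {0..<r}"
      have "((\<lambda>t. f1 t ^ (n+1) - (n+1) * d * exp (h t)) has_real_derivative
              of_nat (n+1) * f1 t ^ n * f2 t - (n+1) * d * (exp (h t) * f1 t)) (at t within {0..<r})"
        by (rule derivative_eq_intros hd fd t | simp)+
      moreover have "of_nat (n+1) * f1 t ^ n * f2 t - (n+1) * d * (exp (h t) * f1 t)
          = (n+1) * f1 t * exp (h t) * (D t - d)"
      proof -
        have "f1 t ^ n = f1 t * f1 t ^ (n-1)" using n2 by (cases n) auto
        hence "f1 t ^ n * f2 t = f1 t * (exp (h t) * D t)" using eq[OF t] by (simp add: mult_ac)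
        thus ?thesis by (simp add: algebra_simps)
      qed
      ultimately show "((\<lambda>t. f1 t ^ (n+1) - (n+1) * d * exp (h t)) has_real_derivative
              (n+1) * f1 t * exp (h t) * (D t - d)) (at t within {0..<r})" by simp
    next
      fix t assume t: "1 < t" "t < u"
      have "D t \<ge> d" unfolding d_def using t by (intro Dmono) auto
      moreover have "f1 t \<ge> 0" using f1_nn[of t] t u by simp
      ultimately show "0 \<le> (n+1) * f1 t * exp (h t) * (D t - d)" by simp
    qed (use u u2 in auto)
    moreover have m2: "f1 1 ^ (n+1) \<ge> 0" using f1_nn[of 1] r1 by simp
    moreover have "exp (h 1) * 2 \<le> exp (h u)"
    proof -
      have "exp (h 1) * 2 = exp (h u2)" using u2 by (simp add: exp_add)
      also have "\<dots> \<le> exp (h u)" using h_mono[of u2 u] u u2 by simp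
      finally show ?thesis .
    qed
    ultimately have "f1 u ^ (n+1) \<ge> (n+1) * d * exp (h u) / 2"
    proof -
      have "exp (h 1) \<le> exp (h u) / 2" using \<open>exp (h 1) * 2 \<le> exp (h u)\<close> by simp
      hence "(n+1) * d * exp (h 1) \<le> (n+1) * d * (exp (h u) / 2)"
        by (rule mult_left_mono) (use d0 in simp)
      hence "(n+1) * d * exp (h 1) \<le> (n+1) * d * exp (h u) / 2" by simp
      thus ?thesis using m1 m2 by linarith
    qed
    moreover have c0e: "c0 ^ (n+1) = (n+1) * d / 2" unfolding c0_def
      by (rule real_root_pow_pos2) (use d0 in auto)
    moreover have "c0 ^ (n+1) * exp (h u) = (n+1) * d * exp (h u) / 2" by (subst c0e) simp
    ultimately show ?thesis by linarith
  qed
  have f1lb: "f1 u \<ge> c0 * exp (h u / (n+1))" if u: "u2 \<le> u" "u < r" for u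
  proof -
    have "exp (h u / (n+1)) ^ (n+1) = exp (of_nat (n+1) * (h u / (n+1)))"
      by (rule exp_of_nat_mult[symmetric])
    also have "of_nat (n+1) * (h u / (n+1)) = h u" by simp
    finally have E: "(c0 * exp (h u / (n+1))) ^ (n+1) = c0 ^ (n+1) * exp (h u)"
      by (simp only: power_mult_distrib)
    have "(c0 * exp (h u / (n+1))) ^ (n+1) \<le> f1 u ^ (n+1)" unfolding E by (rule psi[OF u])
    hence "(c0 * exp (h u / (n+1))) ^ Suc n \<le> f1 u ^ Suc n" by (simp only: Suc_eq_plus1)
    thus ?thesis by (rule power_le_imp_le_base) (use f1_nn[of u] u u2 in simp)
  qed
  have ub: "u < u2 + B" if u: "u2 \<le> u" "u < r" for u
  proof -
    have Q: "- (n+1) * exp (- h u2 / (n+1)) - c0 * u2 \<le> - (n+1) * exp (- h u / (n+1)) - c0 * u"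
    proof (rule mono_within[where r=r and f="\<lambda>t. - (n+1) * exp (- h t / (n+1)) - c0 * t"
          and f'="\<lambda>t. exp (- h t / (n+1)) * f1 t - c0"])
      fix t assume t: "t \<in> {0..<r}"
      show "((\<lambda>t. - (n+1) * exp (- h t / (n+1)) - c0 * t) has_real_derivative
              exp (- h t / (n+1)) * f1 t - c0) (at t within {0..<r})"
        apply (rule derivative_eq_intros hd t refl | simp)+
        apply (simp add: field_simps)
        done
    next
      fix t assume t: "u2 < t" "t < u"
      have "c0 * exp (h t / (n+1)) \<le> f1 t" using f1lb[of t] t u by simp
      hence "exp (- h t / (n+1)) * (c0 * exp (h t / (n+1))) \<le> exp (- h t / (n+1)) * f1 t"
        by (rule mult_left_mono) simp
      moreover have "exp (- h t / (n+1)) * (c0 * exp (h t / (n+1))) = c0"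
        by (simp add: exp_minus field_simps)
      ultimately show "0 \<le> exp (- h t / (n+1)) * f1 t - c0" by linarith
    qed (use u u2 in auto)
    have E2: "exp (- h u2 / (n+1)) \<le> exp (- h 0 / (n+1))"
    proof -
      have "h 0 \<le> h u2" using h_mono[of 0 u2] u2 v by simp
      hence "- h u2 / (n+1) \<le> - h 0 / (n+1)" by (intro divide_right_mono) auto
      thus ?thesis by simp
    qed
    have E3: "(n+1) * exp (- h u2 / (n+1)) \<le> (n+1) * exp (- h 0 / (n+1))"
      by (rule mult_left_mono[OF E2]) simp
    have E4: "(n+1) * exp (- h u / (n+1)) > 0" by simp
    have E5: "- (n+1) * exp (- h u2 / (n+1)) = - ((n+1) * exp (- h u2 / (n+1)))"
      "- (n+1) * exp (- h u / (n+1)) = - ((n+1) * exp (- h u / (n+1)))" by (simp_all only: mult_minus_left)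
    have "c0 * u - c0 * u2 < (n+1) * exp (- h 0 / (n+1))"
      using Q E3 E4 unfolding E5 by linarith
    hence "c0 * (u - u2) < (n+1) * exp (- h 0 / (n+1))" by (simp add: right_diff_distrib)
    thus ?thesis using c0p by (simp add: B_def field_simps)
  qed
  have "r \<le> u2 + B"
  proof (rule ccontr)
    assume "\<not> r \<le> u2 + B"
    moreover have "B > 0" using c0p by (simp add: B_def)
    ultimately have "u2 \<le> (r + u2 + B)/2" "(r + u2 + B)/2 < r" by auto
    from ub[OF this] \<open>\<not> r \<le> u2 + B\<close> show False by (simp add: field_simps)
  qed
  thus ?thesis using ph1 by (simp add: q_def B_def c0_def d_def)
qed


lemma K_lower:
  assumes Kd: "\<And>u. 0 \<le> u \<Longrightarrow> (Kinf has_real_derivative root n (F u)) (at u within {0..})"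
    and u: "0 \<le> u" "u < r"
  shows "Kinf u \<le> exp (- h 0 / n) * (h u - h 0) - exp (- h 0 / n) * (h 0 - h 0) + Kinf 0"
proof -
  define c where "c = exp (- h 0 / n)"
  have "c * (h 0 - h 0) - Kinf 0 \<le> c * (h u - h 0) - Kinf u"
  proof (rule mono_within[where r=r and f="\<lambda>t. c * (h t - h 0) - Kinf t"
        and f'="\<lambda>t. c * f1 t - root n (F t)"])
    fix t assume t: "t \<in> {0..<r}"
    show "((\<lambda>t. c * (h t - h 0) - Kinf t) has_real_derivative c * f1 t - root n (F t)) (at t within {0..<r})"
      by (rule derivative_eq_intros hd t DERIV_subset[OF Kd] | use t in force)+
  next
    fix t assume t: "0 < t" "t < u"
    have Fn: "F t \<ge> 0" using Fmono[of 0 t] F0 t by simp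
    have "root n (F t) ^ n = F t" using Fn n2 by simp
    also have "F t \<le> c ^ n * f1 t ^ n"
    proof -
      have cn: "c ^ n = exp (- h 0)" unfolding c_def using exp_div_pow[of n "- h 0"] n2 by simp
      have L: "exp (h 0) * F t \<le> f1 t ^ n" using lower[of t] t u by simp
      have "c^n * (exp (h 0) * F t) \<le> c^n * f1 t^n" by (rule mult_left_mono[OF L]) (simp add: c_def)
      moreover have "c^n * (exp (h 0) * F t) = F t" by (simp add: cn mult.assoc[symmetric] flip: exp_add)
      ultimately show ?thesis by simp
    qed
    also have "\<dots> = (c * f1 t) ^ n" by (simp add: power_mult_distrib)
    finally have "root n (F t) \<le> c * f1 t"
      by (rule pow_le_base) (use f1_nn[of t] t u n2 in \<open>auto simp: c_def\<close>)
    thus "0 \<le> c * f1 t - root n (F t)" by simp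
  qed (use u in auto)
  thus ?thesis unfolding c_def by simp
qed

lemma K_upper:
  assumes Kd: "\<And>u. 0 \<le> u \<Longrightarrow> (Kinf has_real_derivative root n (F u)) (at u within {0..})"
    and u: "0 \<le> u" "u < r"
  shows "Kinf 0 + n * exp (- h 0 / n) * exp (- (h 0 - h 0) / n) \<le> Kinf u + n * exp (- h 0 / n) * exp (- (h u - h 0) / n)"
proof -
  define c where "c = exp (- h 0 / n)"
  show ?thesis unfolding c_def[symmetric]
  proof (rule mono_within[where r=r and f="\<lambda>t. Kinf t + n * c * exp (- (h t - h 0) / n)"
        and f'="\<lambda>t. root n (F t) - c * exp (- (h t - h 0) / n) * f1 t"])
    fix t assume t: "t \<in> {0..<r}"
    show "((\<lambda>t. Kinf t + n * c * exp (- (h t - h 0) / n)) has_real_derivative root n (F t) - c * exp (- (h t - h 0) / n) * f1 t) (at t within {0..<r})"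
      by (rule derivative_eq_intros hd t DERIV_subset[OF Kd] refl | use t n2 in force)+
  next
    fix t assume t: "0 < t" "t < u"
    have Fn: "F t \<ge> 0" using Fmono[of 0 t] F0 t by simp
    have cn: "c ^ n = exp (- h 0)" unfolding c_def using exp_div_pow[of n "- h 0"] n2 by simp
    have "(c * f1 t) ^ n = c ^ n * f1 t ^ n" by (simp add: power_mult_distrib)
    also have "\<dots> \<le> exp (- h 0) * (exp (h t) * F t)"
      unfolding cn by (rule mult_left_mono[OF upper]) (use t u in auto)
    also have "\<dots> = exp ((h t - h 0) / n) ^ n * root n (F t) ^ n"
    proof -
      have "exp ((h t - h 0) / n) ^ n = exp (h t - h 0)" using exp_div_pow[of n "h t - h 0"] n2 by simp
      moreover have "root n (F t) ^ n = F t" using Fn n2 by simp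
      moreover have "exp (h t - h 0) = exp (- h 0) * exp (h t)" by (simp add: exp_diff exp_minus field_simps)
      ultimately show ?thesis by simp
    qed
    also have "\<dots> = (exp ((h t - h 0) / n) * root n (F t)) ^ n" by (simp add: power_mult_distrib)
    finally have "c * f1 t \<le> exp ((h t - h 0) / n) * root n (F t)"
      by (rule pow_le_base) (use Fn n2 in auto)
    hence "exp (- (h t - h 0) / n) * (c * f1 t) \<le> exp (- (h t - h 0) / n) * (exp ((h t - h 0) / n) * root n (F t))"
      by (rule mult_left_mono) simp
    also have "\<dots> = root n (F t)"
    proof -
      have "exp (- (h t - h 0) / n) = inverse (exp ((h t - h 0) / n))"
        by (subst minus_divide_left[symmetric]) (rule exp_minus)
      thus ?thesis by simp
    qed
    finally show "0 \<le> root n (F t) - c * exp (- (h t - h 0) / n) * f1 t" by (simp add: mult_ac)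
  qed (use u in auto)
qed


end


lemma analytic_deriv0:
  fixes g :: "real \<Rightarrow> real"
  assumes an: "real_analytic_on g {0..<r\<^sup>2}" and r: "r > 0"
  shows "\<exists>g'. (g has_real_derivative g') (at 0)"
proof -
  have "(0::real) \<in> {0..<r\<^sup>2}" using r by simp
  then obtain c e where e: "e > 0" "\<And>y. \<bar>y - 0\<bar> < e \<Longrightarrow> (\<lambda>k. c k * (y - 0) ^ k) sums g y"
    using an unfolding real_analytic_on_def by blast
  have sm: "\<And>z. norm z < e \<Longrightarrow> summable (\<lambda>k. c k * z ^ k)"
    using e(2) by (auto simp: sums_iff)
  have "((\<lambda>z. \<Sum>k. c k * z^k) has_field_derivative (\<Sum>k. diffs c k * 0^k)) (at (0::real))"
    by (rule termdiffs_strong'[OF sm]) (use e in auto)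
  hence "(g has_field_derivative (\<Sum>k. diffs c k * 0^k)) (at (0::real) within UNIV)"
  proof (rule has_field_derivative_transform_within[OF _ e(1)])
    fix x :: real assume "dist x 0 < e"
    thus "(\<Sum>k. c k * x^k) = g x" using e(2)[of x] by (simp add: sums_iff dist_real_def)
  qed auto
  thus ?thesis by blast
qed

lemma f1_zero:
  fixes h f1 g :: "real \<Rightarrow> real"
  assumes an: "real_analytic_on g {0..<r\<^sup>2}" and r: "r > 0"
    and hg: "\<forall>u\<in>{0..<r}. h u = g (u\<^sup>2)"
    and hd: "(h has_real_derivative f1 0) (at 0 within {0..<r})"
  shows "f1 0 = 0"
proof -
  obtain g' where g': "(g has_real_derivative g') (at 0)" using analytic_deriv0[OF an r] by blast
  have "((\<lambda>u. g (u\<^sup>2)) has_real_derivative g' * (2 * 0)) (at 0)"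
    using DERIV_chain2[OF _ DERIV_pow[of 2 0]] g' by simp
  hence "((\<lambda>u. g (u\<^sup>2)) has_real_derivative 0) (at 0 within {0..<r})"
    by (simp add: has_field_derivative_at_within)
  hence "(h has_real_derivative 0) (at 0 within {0..<r})"
  proof (rule has_field_derivative_transform_within[OF _ r])
    fix x assume "x \<in> {0..<r}" thus "g (x\<^sup>2) = h x" using hg by simp
  qed (use r in auto)
  moreover have "at 0 within {0..<r} \<noteq> bot"
    using r by (simp add: trivial_limit_within)
  ultimately show ?thesis using has_field_derivative_unique hd by blast
qed



lemma antideriv:
  fixes \<phi> :: "real \<Rightarrow> real"
  assumes "continuous_on {0..} \<phi>"
  shows "\<exists>P. P 0 = 0 \<and> (\<forall>u\<ge>0. (P has_real_derivative \<phi> u) (at u within {0..}))"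
proof (intro exI[where x="\<lambda>x. integral {0..x} \<phi>"] conjI allI impI)
  show "integral {0..0} \<phi> = 0" by simp
  fix u :: real assume u: "u \<ge> 0"
  have "continuous_on {0..u+1} \<phi>" by (rule continuous_on_subset[OF assms]) auto
  hence "((\<lambda>x. integral {0..x} \<phi>) has_real_derivative \<phi> u) (at u within {0..u+1})"
    by (rule integral_has_real_derivative) (use u in auto)
  moreover have "at u within {0..u+1} = at u within {0..}"
    by (rule at_within_nhd[where S="{..<u+1}"]) auto
  ultimately show "((\<lambda>x. integral {0..x} \<phi>) has_real_derivative \<phi> u) (at u within {0..})" by simp
qed

lemma cont_from_deriv:
  fixes P :: "real \<Rightarrow> real"
  assumes "\<forall>u\<ge>0. (P has_real_derivative \<phi> u) (at u within {0..})"
  shows "continuous_on {0..} P"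
  using assms by (meson DERIV_continuous atLeast_iff continuous_on_eq_continuous_within)



lemma alg:
  fixes nn c z x :: real
  assumes nn: "nn > 0" and c: "c > 0" and z: "z \<ge> 0" and x: "x \<ge> 0"
    and le: "nn * c * (1 - exp (- z)) \<le> x" and xs: "x \<le> nn * c / 2"
  shows "nn * c * z \<le> x + 2 * x^2 / (nn * c)"
proof -
  define y where "y = x / (nn * c)"
  have p: "nn * c > 0" using nn c by simp
  have y0: "y \<ge> 0" "y \<le> 1/2" using x xs p by (auto simp: y_def field_simps)
  have "(1 - exp (- z)) * (nn * c) \<le> x" using le by (simp add: mult.commute)
  hence "1 - exp (- z) \<le> y" unfolding y_def by (simp add: pos_le_divide_eq[OF p])
  hence e1: "exp (- z) \<ge> 1 - y" by simp
  have "exp z = 1 / exp (- z)" by (simp add: exp_minus divide_inverse)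
  also have "\<dots> \<le> 1 / (1 - y)" by (rule divide_left_mono[OF e1]) (use y0 in auto)
  finally have "exp z \<le> 1 / (1 - y)" .
  moreover have "1 + z \<le> exp z" by (rule exp_ge_add_one_self)
  ultimately have "z \<le> 1 / (1 - y) - 1" by linarith
  also have "\<dots> = y / (1 - y)" using y0 by (simp add: field_simps)
  also have "\<dots> \<le> y + 2 * y^2"
  proof -
    have "y \<le> (y + 2 * y^2) * (1 - y)"
    proof -
      have "0 \<le> y^2 * (1 - 2*y)" using y0 by simp
      thus ?thesis by (simp add: algebra_simps power2_eq_square power3_eq_cube)
    qed
    thus ?thesis using y0 by (simp add: field_simps)
  qed
  finally have "z \<le> y + 2 * y^2" .
  hence "nn * c * z \<le> nn * c * (y + 2 * y^2)" using p by (intro mult_left_mono) auto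
  also have "\<dots> = x + 2 * x^2 / (nn * c)" using nn c by (simp add: y_def field_simps power2_eq_square)
  finally show ?thesis .
qed


theorem proposition3p2:
  fixes M :: model_space and n :: nat and h :: "real \<Rightarrow> real \<Rightarrow> real"
  assumes dim: "admissible_dim M n"
    and h_sol: "\<And>r. r > 0 \<Longrightarrow> solves_MA n r (h r) (\<lambda>u. exp (h r u) * DM M n u)"
    and h_blowup: "\<And>r. r > 0 \<Longrightarrow> filterlim (h r) at_top (at_left r)"
    and h_analytic: "\<And>r. r > 0 \<Longrightarrow>
           \<exists>g. real_analytic_on g {0..<r\<^sup>2} \<and> (\<forall>u\<in>{0..<r}. h r u = g (u\<^sup>2))"
  defines "a \<equiv> (\<lambda>r. h r 0)"
    and "K \<equiv> (\<lambda>r u. exp (- h r 0 / real n) * (h r u - h r 0))"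
  shows "(\<forall>r>0. solves_MA n r (K r) (\<lambda>u. exp (exp (a r / real n) * K r u) * DM M n u)
                \<and> filterlim (K r) at_top (at_left r))
       \<and> (\<forall>r>0. \<forall>u\<in>{0..<r}. K r u \<ge> 0)
       \<and> (\<exists>Klim. continuous_on {0..} Klim \<and>
            (\<forall>C. compact C \<and> C \<subseteq> {0..} \<longrightarrow>
               (\<forall>\<epsilon>>0. \<exists>R. \<forall>r\<ge>R. \<forall>u\<in>C. \<bar>K r u - Klim u\<bar> < \<epsilon>)))"
proof -
  have n2: "n \<ge> 2" using dim by (cases M) auto
  have n0: "real n > 0" using n2 by simp
  define D where "D = DM M n"
  have Dc: "continuous_on {0..} D" unfolding D_def by (rule continuous_on_subset[OF DM_cont]) simp
  have "continuous_on {0..} (\<lambda>t. real n * D t)" using Dc by (intro continuous_intros)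
  then obtain F where F0: "F 0 = 0" and Fd: "\<forall>u\<ge>0. (F has_real_derivative n * D u) (at u within {0..})"
    using antideriv by blast
  have Fc: "continuous_on {0..} F" by (rule cont_from_deriv[OF Fd])
  have "continuous_on {0..} (\<lambda>t. root n (F t))" using Fc by (intro continuous_intros)
  then obtain Kinf where Ki0: "Kinf 0 = 0"
      and Kid: "\<forall>u\<ge>0. (Kinf has_real_derivative root n (F u)) (at u within {0..})"
    using antideriv by blast
  have Kic: "continuous_on {0..} Kinf" by (rule cont_from_deriv[OF Kid])
  interpret FD n D F
    by unfold_locales (use n2 Fd F0 in \<open>auto simp: D_def intro: DM_pos DM_mono DM_nonneg\<close>)
  have Kimono: "Kinf x \<le> Kinf y" if "0 \<le> x" "x \<le> y" for x y
  proof (rule mono_within[where r="y+1" and f=Kinf and f'="\<lambda>t. root n (F t)"])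
    fix t assume "t \<in> {0..<y+1}"
    thus "(Kinf has_real_derivative root n (F t)) (at t within {0..<y+1})"
      by (intro DERIV_subset[OF Kid[rule_format]]) auto
  next
    fix t assume "x < t" "t < y"
    thus "0 \<le> root n (F t)" using Fmono[of 0 t] F0 that n2 by simp
  qed (use that in auto)
  have data: "\<exists>f1 f2. setting n D F r (h r) f1 f2" if r: "r > 0" for r
  proof -
    obtain f1 f2 where ff: "\<forall>u\<in>{0..<r}.
        (h r has_real_derivative f1 u) (at u within {0..<r}) \<and>
        (f1 has_real_derivative f2 u) (at u within {0..<r}) \<and>
        f2 u * (f1 u) ^ (n - 1) = exp (h r u) * DM M n u"
      using h_sol[OF r] unfolding solves_MA_def by blast
    obtain g where g: "real_analytic_on g {0..<r\<^sup>2}" "\<forall>u\<in>{0..<r}. h r u = g (u\<^sup>2)"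
      using h_analytic[OF r] by blast
    have "f1 0 = 0" by (rule f1_zero[OF g(1) r g(2)]) (use ff r in auto)
    hence "setting n D F r (h r) f1 f2"
      by unfold_locales (use r ff h_blowup[OF r] in \<open>auto simp: D_def\<close>)
    thus ?thesis by blast
  qed
  have Kge: "Kinf u \<le> K r u" if rr: "r > 0" "0 \<le> u" "u < r" for r u
  proof -
    obtain f1 f2 where "setting n D F r (h r) f1 f2" using data[OF rr(1)] by blast
    then interpret S: setting n D F r "h r" f1 f2 .
    have "Kinf u \<le> exp (- h r 0 / n) * (h r u - h r 0) - exp (- h r 0 / n) * (h r 0 - h r 0) + Kinf 0"
      by (rule S.K_lower[of Kinf u, OF Kid[rule_format] rr(2,3)])
    thus ?thesis using Ki0 by (simp add: K_def)
  qed
  have Kle: "n * exp (- h r 0 / n) * (1 - exp (- ((h r u - h r 0) / n))) \<le> Kinf u"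
    if rr: "r > 0" "0 \<le> u" "u < r" for r u
  proof -
    obtain f1 f2 where "setting n D F r (h r) f1 f2" using data[OF rr(1)] by blast
    then interpret S: setting n D F r "h r" f1 f2 .
    have E1: "exp (- (h r 0 - h r 0) / n) = 1" by simp
    have E2: "exp (- (h r u - h r 0) / n) = exp (- ((h r u - h r 0) / n))" by (simp add: diff_divide_distrib)
    have E3: "n * exp (- h r 0 / n) * (1 - exp (- ((h r u - h r 0) / n)))
        = n * exp (- h r 0 / n) - n * exp (- h r 0 / n) * exp (- ((h r u - h r 0) / n))"
      by (simp only: right_diff_distrib mult_1_right)
    have "Kinf 0 + n * exp (- h r 0 / n) * exp (- (h r 0 - h r 0) / n)
        \<le> Kinf u + n * exp (- h r 0 / n) * exp (- (h r u - h r 0) / n)"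
      by (rule S.K_upper[of Kinf u, OF Kid[rule_format] rr(2,3)])
    hence "n * exp (- h r 0 / n) \<le> Kinf u + n * exp (- h r 0 / n) * exp (- ((h r u - h r 0) / n))"
      unfolding E1 E2 Ki0 by simp
    thus ?thesis unfolding E3 by linarith
  qed
  have hmono: "h r 0 \<le> h r u" if rr: "r > 0" "0 \<le> u" "u < r" for r u
  proof -
    obtain f1 f2 where "setting n D F r (h r) f1 f2" using data[OF rr(1)] by blast
    then interpret S: setting n D F r "h r" f1 f2 .
    show ?thesis by (rule S.h_mono[of 0 u]) (use rr in auto)
  qed
  have bnd: "r \<le> 1 + ln 2 / root n (exp (h r 0) * F 1)
              + (n+1) * exp (- h r 0 / (n+1)) / root (n+1) ((n+1) * D 1 / 2)" if rr: "r > 1" for r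
  proof -
    have "r > 0" using rr by simp
    then obtain f1 f2 where "setting n D F r (h r) f1 f2" using data by blast
    then interpret S: setting n D F r "h r" f1 f2 .
    show ?thesis by (rule S.blowup_bound[OF rr])
  qed
  have P1: "solves_MA n r (K r) (\<lambda>u. exp (exp (a r / real n) * K r u) * DM M n u)
                \<and> filterlim (K r) at_top (at_left r)" if r: "r > 0" for r
  proof
    define c where "c = exp (- h r 0 / real n)"
    have c0: "c > 0" by (simp add: c_def)
    obtain f1 f2 where ff: "\<forall>u\<in>{0..<r}.
        (h r has_real_derivative f1 u) (at u within {0..<r}) \<and>
        (f1 has_real_derivative f2 u) (at u within {0..<r}) \<and>
        f2 u * (f1 u) ^ (n - 1) = exp (h r u) * DM M n u"
      using h_sol[OF r] unfolding solves_MA_def by blast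
    have Kr: "K r = (\<lambda>u. c * (h r u - h r 0))" by (simp add: K_def c_def)
    have cn: "c ^ n = exp (- h r 0)" unfolding c_def using exp_div_pow[of n "- h r 0"] n2 by simp
    have ce: "exp (a r / real n) * c = 1" by (simp add: a_def c_def flip: exp_add)
    show "solves_MA n r (K r) (\<lambda>u. exp (exp (a r / real n) * K r u) * DM M n u)"
      unfolding solves_MA_def
    proof (rule exI[where x="\<lambda>u. c * f1 u"], rule exI[where x="\<lambda>u. c * f2 u"], intro ballI conjI)
      fix u assume u: "u \<in> {0..<r}"
      show "(K r has_real_derivative c * f1 u) (at u within {0..<r})"
        unfolding Kr using ff u by (auto intro!: derivative_eq_intros)
    next
      fix u assume u: "u \<in> {0..<r}"
      show "((\<lambda>u. c * f1 u) has_real_derivative c * f2 u) (at u within {0..<r})"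
        using ff u by (auto intro!: derivative_eq_intros)
    next
      fix u assume u: "u \<in> {0..<r}"
      have "c * f2 u * (c * f1 u) ^ (n - 1) = c ^ n * (f2 u * f1 u ^ (n-1))"
        using n2 by (cases n) (simp_all add: power_mult_distrib)
      also have "\<dots> = exp (- h r 0) * (exp (h r u) * DM M n u)" using ff u cn by simp
      also have "\<dots> = exp (h r u - h r 0) * DM M n u" by (simp add: exp_diff exp_minus field_simps)
      also have "h r u - h r 0 = exp (a r / real n) * K r u"
        by (simp add: Kr mult.assoc[symmetric] ce)
      finally show "c * f2 u * (c * f1 u) ^ (n - 1) = exp (exp (a r / real n) * K r u) * DM M n u" .
    qed
    have "filterlim (\<lambda>u. - h r 0 + h r u) at_top (at_left r)"
      by (rule filterlim_tendsto_add_at_top[OF tendsto_const h_blowup[OF r]])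
    hence "filterlim (\<lambda>u. c * (- h r 0 + h r u)) at_top (at_left r)"
      by (rule filterlim_tendsto_pos_mult_at_top[OF tendsto_const c0])
    thus "filterlim (K r) at_top (at_left r)" unfolding Kr by (simp add: algebra_simps)
  qed
  have P2: "K r u \<ge> 0" if "r > 0" "u \<in> {0..<r}" for r u
    using hmono[of r u] that by (simp add: K_def)
  have P3: "\<exists>R. \<forall>r\<ge>R. \<forall>u\<in>C. \<bar>K r u - Kinf u\<bar> < \<epsilon>0"
    if C: "compact C" "C \<subseteq> {0..}" and e0: "\<epsilon>0 > 0" for C \<epsilon>0
  proof -
    obtain B where B: "\<forall>x\<in>C. norm x \<le> B" using compact_imp_bounded[OF C(1)] bounded_iff by blast
    define B' where "B' = max B 0"
    have CB: "u \<in> {0..B'}" if "u \<in> C" for u using B that C(2) by (force simp: B'_def)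
    define Mx where "Mx = Kinf B'"
    have Mx0: "Mx \<ge> 0" using Kimono[of 0 B'] Ki0 by (simp add: Mx_def B'_def)
    have xM: "0 \<le> Kinf u \<and> Kinf u \<le> Mx" if "u \<in> C" for u
      using Kimono[of 0 u] Kimono[of u B'] CB[OF that] Ki0 by (simp add: Mx_def)
    define \<delta> where "\<delta> = min (n / (2 * (Mx + 1))) (\<epsilon>0 * n / (4 * (Mx + 1)^2))"
    have \<delta>0: "\<delta> > 0" using Mx0 e0 n0 by (simp add: \<delta>_def)
    define A where "A = n * ln \<delta>"
    have eA: "exp (- A / n) = 1 / \<delta>"
    proof -
      have "A / n = ln \<delta>" using n0 by (simp add: A_def)
      hence "exp (- A / n) = exp (- ln \<delta>)" by simp
      also have "\<dots> = 1 / \<delta>" using \<delta>0 by (simp add: exp_minus divide_inverse)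
      finally show ?thesis .
    qed
    define q where "q = root n (exp A * F 1)"
    define c1 where "c1 = root (n+1) ((n+1) * D 1 / 2)"
    define R1 where "R1 = 1 + ln 2 / q + (n+1) * exp (- A / (n+1)) / c1"
    have q0: "q > 0" using F1pos n2 by (simp add: q_def)
    have c10: "c1 > 0" using DM_pos[of 1 M n] by (simp add: c1_def D_def)
    have aA: "h r 0 < A" if "r > R1" "r > 1" for r
    proof (rule ccontr)
      assume "\<not> h r 0 < A"
      hence ge: "A \<le> h r 0" by simp
      have "q \<le> root n (exp (h r 0) * F 1)"
        unfolding q_def using ge F1pos n2 by simp
      hence t1: "ln 2 / root n (exp (h r 0) * F 1) \<le> ln 2 / q"
        using q0 by (intro divide_left_mono) auto
      have "exp (- h r 0 / (n+1)) \<le> exp (- A / (n+1))" using ge by (simp add: divide_right_mono)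
      hence t2: "(n+1) * exp (- h r 0 / (n+1)) / c1 \<le> (n+1) * exp (- A / (n+1)) / c1"
        using c10 by (intro divide_right_mono mult_left_mono) auto
      have "r \<le> 1 + ln 2 / root n (exp (h r 0) * F 1) + (n+1) * exp (- h r 0 / (n+1)) / c1"
        using bnd[OF that(2)] by (simp add: c1_def)
      with t1 t2 that(1) show False unfolding R1_def by linarith
    qed
    define R where "R = max (max (B' + 1) (R1 + 1)) 2"
    show ?thesis
    proof (intro exI[where x=R] allI impI ballI)
      fix r u assume r: "R \<le> r" and u: "u \<in> C"
      have r1: "r > 1" "r > R1" "r > B'" using r by (auto simp: R_def)
      have r0: "r > 0" using r1 by simp
      have u0: "0 \<le> u" "u < r" using CB[OF u] r1 by auto
      define x where "x = Kinf u"
      have x: "0 \<le> x" "x \<le> Mx" using xM[OF u] by (auto simp: x_def)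
      define c where "c = exp (- h r 0 / n)"
      have c0: "c > 0" by (simp add: c_def)
      have c\<delta>: "c > 1 / \<delta>"
      proof -
        have "- A / n < - h r 0 / n" using aA[OF r1(2,1)] n0 by (simp add: divide_strict_right_mono)
        thus ?thesis unfolding c_def eA[symmetric] by simp
      qed
      have \<delta>1: "\<delta> \<le> n / (2 * (Mx + 1))" "\<delta> \<le> \<epsilon>0 * n / (4 * (Mx + 1)^2)" by (simp_all add: \<delta>_def)
      define z where "z = (h r u - h r 0) / n"
      have z0: "z \<ge> 0" using hmono[OF r0 u0] n0 by (simp add: z_def)
      have Kz: "K r u = n * c * z" using n0 by (simp add: K_def c_def z_def)
      have le1: "n * c * (1 - exp (- z)) \<le> x" using Kle[OF r0 u0] by (simp add: x_def c_def z_def)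
      have cbig: "n * c / 2 > Mx + 1"
      proof -
        have p: "\<delta> * (2 * (Mx + 1)) \<le> n" using \<delta>1(1) Mx0 by (simp add: pos_le_divide_eq)
        have "c * \<delta> > 1" using c\<delta> \<delta>0 by (simp add: divide_less_eq)
        hence "(c * \<delta>) * (2 * (Mx + 1)) > 1 * (2 * (Mx + 1))" using Mx0
          by (intro mult_strict_right_mono) auto
        moreover have "c * (\<delta> * (2 * (Mx + 1))) \<le> c * n" using p c0 by (intro mult_left_mono) auto
        ultimately have "c * n > 2 * (Mx + 1)" by (simp add: mult.assoc)
        thus ?thesis by (simp add: mult.commute)
      qed
      have xs: "x \<le> n * c / 2" using x cbig by linarith
      have main: "n * c * z \<le> x + 2 * x^2 / (n * c)" by (rule alg[OF n0 c0 z0 x(1) le1 xs])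
      have "2 * x^2 / (n * c) \<le> 2 * (Mx+1)^2 / (n * c)"
        using x n0 c0 by (intro divide_right_mono mult_left_mono power_mono) auto
      also have "\<dots> < 2 * (Mx+1)^2 * \<delta> / n"
      proof -
        have "1 / c < \<delta>" using c\<delta> c0 \<delta>0 by (simp add: field_simps)
        hence "2 * (Mx+1)^2 / n * (1 / c) < 2 * (Mx+1)^2 / n * \<delta>"
          using Mx0 n0 by (intro mult_strict_left_mono) auto
        thus ?thesis by (simp add: field_simps)
      qed
      also have "\<dots> \<le> \<epsilon>0 / 2"
      proof -
        have "2 * (Mx+1)^2 * \<delta> \<le> 2 * (Mx+1)^2 * (\<epsilon>0 * n / (4 * (Mx + 1)^2))"
          using \<delta>1(2) by (intro mult_left_mono) auto
        also have "\<dots> = \<epsilon>0 * n / 2"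
        proof -
          have "(Mx + 1)^2 \<noteq> 0" using Mx0 by simp
          thus ?thesis by (simp add: field_simps)
        qed
        finally show ?thesis using n0 by (simp add: field_simps)
      qed
      finally have "2 * x^2 / (n * c) < \<epsilon>0 / 2" .
      moreover have "x \<le> K r u" using Kge[OF r0 u0] by (simp add: x_def)
      ultimately show "\<bar>K r u - Kinf u\<bar> < \<epsilon>0" using main Kz e0 unfolding x_def by linarith
    qed
  qed
  show ?thesis using P1 P2 P3 Kic by blast
qed


end
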